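(* Let $-\frac1n<\alpha<0$. There exist constants $C\in\mathbb{R}$, $\alpha_1\in(0,-\alpha n)$ and $\alpha_2\in(-\alpha n,1)$ such that for every $\varrho\in\mathcal{P}_1(\mathbb{R}^n)$, $$\mathcal{F}_\alpha(\varrho)\ \ge\ C-\Big(\int_{\mathbb{R}^n}|x|\,d\varrho(x)\Big)^{\alpha_1}-\Big(\int_{\mathbb{R}^n}|x|\,d\varrho(x)\Big)^{\alpha_2}.$$
   Context: $\mathcal{P}_1(\mathbb{R}^n)$ is the set of probability measures on $\mathbb{R}^n$ with finite first moment. Writing the Lebesgue decomposition $\varrho=\rho\,dx+\varrho^s$ ($\varrho^s$ singular to Lebesgue measure), $\mathcal{F}_\alpha(\varrho)=-\int_{\mathbb{R}^n}\rho(x)^{\frac{1}{1-\alpha}}dx$. *)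

theory Defs
  imports "HOL-Probability.Probability"
begin

text \<open>Probability measures on R^n (R^n = euclidean_space 'a, n = DIM('a)) with finite first moment.\<close>
definition P1 :: "'a::euclidean_space measure \<Rightarrow> bool" where
  "P1 M \<longleftrightarrow> prob_space M \<and> sets M = sets borel \<and> integrable M (\<lambda>x. norm x)"

definition lebesgue_decomp ::
  "'a::euclidean_space measure \<Rightarrow> ('a \<Rightarrow> real) \<Rightarrow> 'a measure \<Rightarrow> bool" where
  "lebesgue_decomp M \<rho> S \<longleftrightarrow>
     \<rho> \<in> borel_measurable borel \<and> (\<forall>x. 0 \<le> \<rho> x) \<and>
     sets S = sets borel \<and>
     (\<exists>N\<in>sets borel. emeasure lborel N = 0 \<and> emeasure S (UNIV - N) = 0) \<and>
     (\<forall>A\<in>sets borel. emeasure M A = (\<integral>\<^sup>+x\<in>A. ennreal (\<rho> x) \<partial>lborel) + emeasure S A)"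

text \<open>F_alpha evaluated on the absolutely continuous density rho (value in extended reals).\<close>
definition F_alpha :: "real \<Rightarrow> ('a::euclidean_space \<Rightarrow> real) \<Rightarrow> ereal" where
  "F_alpha \<alpha> \<rho> = - enn2ereal (\<integral>\<^sup>+x. ennreal (\<rho> x powr (1 / (1 - \<alpha>))) \<partial>lborel)"

end

theory Submission
  imports Defs
begin

lemma young_pt:
  fixes p l r g :: real
  assumes p: "0 < p" "p < 1" and l: "l > 0" and r: "r \<ge> 0" and g: "g \<ge> 1"
  shows "r powr p \<le> p * (l * r * g) + (1 - p) * (l powr (-(p/(1-p))) * g powr (-(p/(1-p))))"
proof (cases "r = 0")
  case True
  then show ?thesis using p l g by simp
next
  case False
  have a: "l * r * g > 0" using False r l g by simp
  have b: "l powr (-(p/(1-p))) * g powr (-(p/(1-p))) > 0" using l g by simp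
  have "(l * r * g) powr p * (l powr (-(p/(1-p))) * g powr (-(p/(1-p)))) powr (1 - p)
        = r powr p"
  proof -
    have e: "-(p/(1-p)) * (1-p) = -p" using p by (simp add: field_simps)
    have "(l * r * g) powr p * (l powr (-(p/(1-p))) * g powr (-(p/(1-p)))) powr (1 - p)
       = l powr p * r powr p * g powr p * (l powr (-p) * g powr (-p))"
      using l r g p by (simp add: powr_mult powr_powr e)
    also have "\<dots> = r powr p * ((l powr p * l powr (-p)) * (g powr p * g powr (-p)))" by (simp only: ac_simps)
    also have "\<dots> = r powr p" using l g by (simp add: powr_add[symmetric])
    finally show ?thesis .
  qed
  moreover have "(l * r * g) powr p * (l powr (-(p/(1-p))) * g powr (-(p/(1-p)))) powr (1 - p)
     \<le> p * (l * r * g) + (1 - p) * (l powr (-(p/(1-p))) * g powr (-(p/(1-p))))"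
    by (rule Youngs_inequality_0) (use p a b in auto)
  ultimately show ?thesis by simp
qed

lemma ball_meas:
  fixes r :: real assumes "r \<ge> 0"
  shows "emeasure lborel (ball (0::'a::euclidean_space) r) \<le> ennreal ((2*r) ^ DIM('a))"
proof -
  have "ball (0::'a) r \<subseteq> cbox (- (r *\<^sub>R One)) (r *\<^sub>R One)"
  proof
    fix x :: 'a assume "x \<in> ball 0 r"
    then have "norm x < r" by simp
    then show "x \<in> cbox (- (r *\<^sub>R One)) (r *\<^sub>R One)"
      unfolding mem_box using Basis_le_norm[of _ x] by (force simp: inner_minus_left abs_le_iff)
  qed
  then have "emeasure lborel (ball (0::'a) r) \<le> emeasure lborel (cbox (- (r *\<^sub>R One)) (r *\<^sub>R One) :: 'a set)"
    by (intro emeasure_mono) auto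
  also have "\<dots> = ennreal (\<Prod>b\<in>(Basis::'a set). (r *\<^sub>R One + r *\<^sub>R One) \<bullet> b)"
    using assms by (simp add: emeasure_lborel_cbox_eq inner_minus_left)
  also have "(\<Prod>b\<in>(Basis::'a set). (r *\<^sub>R One + r *\<^sub>R One) \<bullet> b) = (\<Prod>b\<in>(Basis::'a set). 2*r)"
    by (intro prod.cong) (auto simp: inner_add_left)
  also have "\<dots> = (2*r) ^ DIM('a)" by simp
  finally show ?thesis .
qed

lemma tail_finite:
  fixes q :: real
  assumes nq: "real DIM('a::euclidean_space) < q"
  shows "(\<integral>\<^sup>+x. ennreal ((1 + norm (x::'a)) powr (-q)) \<partial>lborel) < \<infinity>"
proof -
  define f where "f k x = ennreal (2 powr (-(real k * q))) * indicator (ball (0::'a) (2^(k+1))) x" for k x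
  have q0: "q > 0" using nq by (smt (verit) of_nat_0_le_iff)
  have pt: "ennreal ((1 + norm x) powr (-q)) \<le> (\<Sum>k. f k x)" for x :: 'a
  proof -
    define y where "y = log 2 (1 + norm x)"
    have y0: "y \<ge> 0" unfolding y_def by (simp add: zero_le_log_cancel_iff add_pos_nonneg)
    define k where "k = nat \<lfloor>y\<rfloor>"
    have kf: "real k = of_int \<lfloor>y\<rfloor>" unfolding k_def using y0 by simp
    have "real k \<le> y" "y < real k + 1" using kf by linarith+
    have e: "2 powr y = 1 + norm x" unfolding y_def by (simp add: add_pos_nonneg)
    have k1: "2 powr (real k) \<le> 1 + norm x" using \<open>real k \<le> y\<close> e by (metis powr_mono one_le_numeral)
    have "(2::real) powr y < 2 powr (real k + 1)" by (rule powr_less_mono) (use \<open>y < real k + 1\<close> in auto)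
    then have k2: "1 + norm x < 2 powr (real k + 1)" using e by simp
    have "2 powr (real k + 1) = 2 ^ (k+1)" by (metis of_nat_Suc add.commute Suc_eq_plus1 powr_realpow zero_less_numeral)
    with k2 have inb: "x \<in> ball 0 (2^(k+1))" by simp
    have "(1 + norm x) powr (-q) \<le> (2 powr (real k)) powr (-q)"
      by (rule powr_mono2') (use q0 k1 in auto)
    also have "\<dots> = 2 powr (-(real k * q))" by (simp add: powr_powr)
    finally have "ennreal ((1 + norm x) powr (-q)) \<le> f k x"
      unfolding f_def using inb by (simp add: ennreal_leI)
    also have "f k x \<le> (\<Sum>k. f k x)"
      using sum_le_suminf[of "\<lambda>k. f k x" "{k}"] by (simp add: summableI)
    finally show ?thesis .
  qed
  have fm: "f k \<in> borel_measurable lborel" for k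
  proof -
    have "ball (0::'a) (2^(k+1)) \<in> sets lborel" by simp
    then have "(\<lambda>x. indicator (ball (0::'a) (2^(k+1))) x :: ennreal) \<in> borel_measurable lborel"
      by (rule borel_measurable_indicator)
    then show ?thesis unfolding f_def by (intro borel_measurable_times_ennreal borel_measurable_const)
  qed
  have "(\<integral>\<^sup>+x. ennreal ((1 + norm (x::'a)) powr (-q)) \<partial>lborel) \<le> (\<integral>\<^sup>+x. (\<Sum>k. f k x) \<partial>lborel)"
    by (intro nn_integral_mono pt)
  also have "\<dots> = (\<Sum>k. \<integral>\<^sup>+x. f k x \<partial>lborel)"
    by (rule nn_integral_suminf[OF fm])
  also have "\<dots> = (\<Sum>k. ennreal (2 powr (-(real k * q))) * emeasure lborel (ball (0::'a) (2^(k+1))))"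
    unfolding f_def by (subst nn_integral_cmult_indicator) auto
  also have "\<dots> \<le> (\<Sum>k. ennreal (4 ^ DIM('a) * (2 powr (real DIM('a) - q)) ^ k))"
  proof (intro suminf_le allI)
    fix k :: nat
    have "ennreal (2 powr (-(real k * q))) * emeasure lborel (ball (0::'a) (2^(k+1)))
        \<le> ennreal (2 powr (-(real k * q))) * ennreal ((2*2^(k+1)) ^ DIM('a))"
      by (intro mult_left_mono ball_meas) auto
    also have "\<dots> = ennreal (2 powr (-(real k * q)) * (2*2^(k+1)) ^ DIM('a))"
      by (rule ennreal_mult[symmetric]) auto
    also have "2 powr (-(real k * q)) * (2*2^(k+1)) ^ DIM('a) = 4 ^ DIM('a) * (2 powr (real DIM('a) - q)) ^ k"
    proof -
      have "(2*2^(k+1)::real) = 4 * 2 powr (real k)" by (simp add: powr_realpow)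
      then have "(2*2^(k+1)::real) ^ DIM('a) = 4 ^ DIM('a) * (2 powr (real k)) ^ DIM('a)"
        by (simp add: power_mult_distrib)
      also have "(2 powr (real k)) ^ DIM('a) = (2::real) powr (real DIM('a) * real k)"
        by (rule powr_power) simp
      finally have "(2*2^(k+1)::real) ^ DIM('a) = 4 ^ DIM('a) * 2 powr (real k * real DIM('a))"
        by (simp add: mult.commute)
      moreover have "(2 powr (real DIM('a) - q)) ^ k = 2 powr (real k * (real DIM('a) - q))"
        by (simp add: powr_power)
      moreover have "(2::real) powr (real k * (real DIM('a) - q)) = 2 powr (-(real k * q)) * 2 powr (real k * real DIM('a))"
      proof -
        have "real k * (real DIM('a) - q) = -(real k * q) + real k * real DIM('a)" by (simp add: algebra_simps)
        then show ?thesis by (simp only: powr_add)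
      qed
      ultimately show ?thesis
        by (simp only: ac_simps)
    qed
    finally show "ennreal (2 powr (-(real k * q))) * emeasure lborel (ball (0::'a) (2^(k+1)))
        \<le> ennreal (4 ^ DIM('a) * (2 powr (real DIM('a) - q)) ^ k)" .
  qed auto
  also have "\<dots> < \<infinity>"
  proof -
    have r: "2 powr (real DIM('a) - q) < 1" using nq by (simp add: powr_less_one)
    have "summable (\<lambda>k. 4 ^ DIM('a) * (2 powr (real DIM('a) - q)) ^ k)"
      by (intro summable_mult summable_geometric) (use r in simp)
    then have "(\<Sum>k. ennreal (4 ^ DIM('a) * (2 powr (real DIM('a) - q)) ^ k)) = ennreal (\<Sum>k. 4 ^ DIM('a) * (2 powr (real DIM('a) - q)) ^ k)"
      by (intro suminf_ennreal2) auto
    then show ?thesis by simp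
  qed
  finally show ?thesis .
qed

lemma elem_bound:
  fixes K p a2 m :: real
  assumes K: "K \<ge> 0" and p: "0 < p" "p < a2" and m: "m \<ge> 0"
  shows "K * (1 + m) powr p \<le> K * (1 + max 1 ((K * 2 powr p) powr (1/(a2-p)))) powr p + m powr a2"
proof -
  define T where "T = max 1 ((K * 2 powr p) powr (1/(a2-p)))"
  have T1: "T \<ge> 1" unfolding T_def by simp
  show ?thesis
  proof (cases "m \<le> T")
    case True
    have "(1 + m) powr p \<le> (1 + T) powr p" by (rule powr_mono2) (use p m True in auto)
    then have "K * (1 + m) powr p \<le> K * (1 + T) powr p" using K by (rule mult_left_mono)
    then have "K * (1 + m) powr p \<le> K * (1 + T) powr p + m powr a2"
      using powr_ge_zero[of m a2] by linarith
    then show ?thesis by (simp only: T_def)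
  next
    case False
    then have mT: "m > T" by simp
    then have m1: "m \<ge> 1" using T1 by simp
    have "(1 + m) powr p \<le> (2 * m) powr p" by (rule powr_mono2) (use p m1 in auto)
    also have "\<dots> = 2 powr p * m powr p" using m by (simp add: powr_mult)
    finally have a: "K * (1 + m) powr p \<le> (K * 2 powr p) * m powr p"
      using K by (simp add: mult_left_mono mult.assoc)
    have e: "a2 - p > 0" using p by simp
    have "K * 2 powr p = ((K * 2 powr p) powr (1/(a2-p))) powr (a2 - p)"
      using e K by (simp add: powr_powr)
    also have "\<dots> \<le> T powr (a2 - p)"
      by (rule powr_mono2) (use e in \<open>auto simp: T_def\<close>)
    also have "\<dots> \<le> m powr (a2 - p)"
      by (rule powr_mono2) (use e mT T1 in auto)
    finally have b: "K * 2 powr p \<le> m powr (a2 - p)" .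
    have "(K * 2 powr p) * m powr p \<le> m powr (a2 - p) * m powr p"
      by (rule mult_right_mono[OF b]) simp
    also have "\<dots> = m powr a2" using m1 by (simp add: powr_add[symmetric])
    finally have "K * (1 + m) powr p \<le> m powr a2" using a by simp
    moreover have "K * (1 + T) powr p \<ge> 0" using K by simp
    ultimately show ?thesis using T_def by simp
  qed
qed

lemma key_bound:
  fixes \<rho> :: "'a::euclidean_space \<Rightarrow> real" and M S :: "'a measure"
  assumes p: "0 < p" "p < 1" and q: "q = p / (1 - p)"
    and I: "(\<integral>\<^sup>+x. ennreal ((1 + norm (x::'a)) powr (-q)) \<partial>lborel) = ennreal I" and I0: "I \<ge> 0"
    and P: "P1 M" and D: "lebesgue_decomp M \<rho> S"
  shows "(\<integral>\<^sup>+x. ennreal (\<rho> x powr p) \<partial>lborel)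
           \<le> ennreal ((p + (1 - p) * I) * (1 + (\<integral>x. norm x \<partial>M)) powr p)"
proof -
  define m where "m = (\<integral>x. norm x \<partial>M)"
  have m0: "m \<ge> 0" unfolding m_def by simp
  have ps: "prob_space M" and sM: "sets M = sets borel" and int: "integrable M (\<lambda>x. norm x)"
    using P unfolding P1_def by auto
  have \<rho>m: "\<rho> \<in> borel_measurable borel" and \<rho>0: "\<And>x. 0 \<le> \<rho> x" and sS: "sets S = sets borel"
    and eq: "\<And>A. A \<in> sets borel \<Longrightarrow> emeasure M A = (\<integral>\<^sup>+x\<in>A. ennreal (\<rho> x) \<partial>lborel) + emeasure S A"
    using D unfolding lebesgue_decomp_def by auto
  define N where "N = density lborel (\<lambda>x. ennreal (\<rho> x))"
  have sN: "sets N = sets M" unfolding N_def using sM by simp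
  have NM: "N \<le> M"
  proof -
    have "emeasure N A \<le> emeasure M A" for A
    proof (cases "A \<in> sets borel")
      case True
      then have "emeasure N A = (\<integral>\<^sup>+x\<in>A. ennreal (\<rho> x) \<partial>lborel)"
        unfolding N_def using \<rho>m by (subst emeasure_density) auto
      also have "\<dots> \<le> emeasure M A" using eq[OF True] by simp
      finally show ?thesis .
    next
      case False
      then have "A \<notin> sets N" "A \<notin> sets M" using sN sM by auto
      then show ?thesis by (simp add: emeasure_notin_sets)
    qed
    then show ?thesis unfolding le_measure_iff using sN sets_eq_imp_space_eq[OF sN]
      by (auto simp: le_fun_def)
  qed
  have c1: "integrable M (\<lambda>x. 1::real)" using ps by (metis prob_space.axioms(1) finite_measure.integrable_const)
  have int1: "integrable M (\<lambda>x. 1 + norm x)" by (rule Bochner_Integration.integrable_add[OF c1 int])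
  have g: "(\<integral>\<^sup>+x. ennreal (\<rho> x) * ennreal (1 + norm x) \<partial>lborel) \<le> ennreal (1 + m)"
  proof -
    have "(\<integral>\<^sup>+x. ennreal (\<rho> x) * ennreal (1 + norm x) \<partial>lborel) = (\<integral>\<^sup>+x. ennreal (1 + norm x) \<partial>N)"
      unfolding N_def using \<rho>m by (subst nn_integral_density) auto
    also have "\<dots> \<le> (\<integral>\<^sup>+x. ennreal (1 + norm x) \<partial>M)"
      by (rule nn_integral_mono_measure[OF sN NM])
    also have "\<dots> = ennreal (\<integral>x. 1 + norm x \<partial>M)"
      by (rule nn_integral_eq_integral[OF int1]) auto
    also have "(\<integral>x. 1 + norm x \<partial>M) = 1 + m"
      unfolding m_def using int ps c1
      by (subst Bochner_Integration.integral_add) (auto simp: prob_space.prob_space)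
    finally show ?thesis .
  qed
  define l where "l = (1 + m) powr (p - 1)"
  have l0: "l > 0" unfolding l_def using m0 by simp
  have pt: "ennreal (\<rho> x powr p) \<le> ennreal (p * l) * (ennreal (\<rho> x) * ennreal (1 + norm x))
        + ennreal ((1 - p) * l powr (-q)) * ennreal ((1 + norm x) powr (-q))" for x :: 'a
  proof -
    have r: "\<rho> x powr p \<le> p * (l * \<rho> x * (1 + norm x)) + (1 - p) * (l powr (-q) * (1 + norm x) powr (-q))"
      using young_pt[OF p l0 \<rho>0[of x], of "1 + norm x"] q by simp
    have "ennreal (\<rho> x powr p) \<le> ennreal (p * (l * \<rho> x * (1 + norm x)) + (1 - p) * (l powr (-q) * (1 + norm x) powr (-q)))"
      by (rule ennreal_leI[OF r])
    also have "\<dots> = ennreal (p * (l * \<rho> x * (1 + norm x))) + ennreal ((1 - p) * (l powr (-q) * (1 + norm x) powr (-q)))"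
      using p l0 \<rho>0[of x] by (intro ennreal_plus) auto
    also have "ennreal (p * (l * \<rho> x * (1 + norm x))) = ennreal (p * l) * (ennreal (\<rho> x) * ennreal (1 + norm x))"
    proof -
      have e1: "p * (l * \<rho> x * (1 + norm x)) = (p * l) * (\<rho> x * (1 + norm x))" by (simp add: mult_ac)
      have e2: "ennreal ((p * l) * (\<rho> x * (1 + norm x))) = ennreal (p * l) * ennreal (\<rho> x * (1 + norm x))"
        by (rule ennreal_mult) (use p l0 \<rho>0[of x] in auto)
      have e3: "ennreal (\<rho> x * (1 + norm x)) = ennreal (\<rho> x) * ennreal (1 + norm x)"
        by (rule ennreal_mult) (use \<rho>0[of x] in auto)
      show ?thesis using e1 e2 e3 by metis
    qed
    also have "ennreal ((1 - p) * (l powr (-q) * (1 + norm x) powr (-q))) = ennreal ((1 - p) * l powr (-q)) * ennreal ((1 + norm x) powr (-q))"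
      using p by (simp add: ennreal_mult[symmetric] mult_ac)
    finally show ?thesis .
  qed
  have "(\<integral>\<^sup>+x. ennreal (\<rho> x powr p) \<partial>lborel)
     \<le> (\<integral>\<^sup>+x. ennreal (p * l) * (ennreal (\<rho> x) * ennreal (1 + norm x))
        + ennreal ((1 - p) * l powr (-q)) * ennreal ((1 + norm x) powr (-q)) \<partial>lborel)"
    by (intro nn_integral_mono pt)
  also have "\<dots> = ennreal (p * l) * (\<integral>\<^sup>+x. ennreal (\<rho> x) * ennreal (1 + norm x) \<partial>lborel)
        + ennreal ((1 - p) * l powr (-q)) * (\<integral>\<^sup>+x. ennreal ((1 + norm (x::'a)) powr (-q)) \<partial>lborel)"
  proof -
    have \<rho>ml[measurable]: "\<rho> \<in> borel_measurable lborel" using \<rho>m by simp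
    have f1: "(\<lambda>x. ennreal (\<rho> x) * ennreal (1 + norm x)) \<in> borel_measurable lborel" by measurable
    have f2: "(\<lambda>x::'a. ennreal ((1 + norm x) powr (-q))) \<in> borel_measurable lborel" by measurable
    have g1: "(\<lambda>x. ennreal (p * l) * (ennreal (\<rho> x) * ennreal (1 + norm x))) \<in> borel_measurable lborel"
      using f1 by measurable
    have g2: "(\<lambda>x::'a. ennreal ((1 - p) * l powr (-q)) * ennreal ((1 + norm x) powr (-q))) \<in> borel_measurable lborel"
      using f2 by measurable
    have "(\<integral>\<^sup>+x. ennreal (p * l) * (ennreal (\<rho> x) * ennreal (1 + norm x))
        + ennreal ((1 - p) * l powr (-q)) * ennreal ((1 + norm x) powr (-q)) \<partial>lborel)
      = (\<integral>\<^sup>+x. ennreal (p * l) * (ennreal (\<rho> x) * ennreal (1 + norm x)) \<partial>lborel)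
        + (\<integral>\<^sup>+x. ennreal ((1 - p) * l powr (-q)) * ennreal ((1 + norm (x::'a)) powr (-q)) \<partial>lborel)"
      by (rule nn_integral_add[OF g1 g2])
    also have "(\<integral>\<^sup>+x. ennreal (p * l) * (ennreal (\<rho> x) * ennreal (1 + norm x)) \<partial>lborel)
        = ennreal (p * l) * (\<integral>\<^sup>+x. ennreal (\<rho> x) * ennreal (1 + norm x) \<partial>lborel)"
      by (rule nn_integral_cmult[OF f1])
    also have "(\<integral>\<^sup>+x. ennreal ((1 - p) * l powr (-q)) * ennreal ((1 + norm (x::'a)) powr (-q)) \<partial>lborel)
        = ennreal ((1 - p) * l powr (-q)) * (\<integral>\<^sup>+x. ennreal ((1 + norm (x::'a)) powr (-q)) \<partial>lborel)"
      by (rule nn_integral_cmult[OF f2])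
    finally show ?thesis .
  qed
  also have "\<dots> \<le> ennreal (p * l) * ennreal (1 + m) + ennreal ((1 - p) * l powr (-q)) * ennreal I"
    unfolding I by (rule add_mono[OF mult_left_mono[OF g zero_le] order_refl])
  also have "\<dots> = ennreal (p * l * (1 + m) + (1 - p) * l powr (-q) * I)"
  proof -
    have A: "ennreal (p * l * (1 + m)) = ennreal (p * l) * ennreal (1 + m)"
      by (rule ennreal_mult) (use p l0 m0 in auto)
    have B: "ennreal ((1 - p) * l powr (-q) * I) = ennreal ((1 - p) * l powr (-q)) * ennreal I"
      by (rule ennreal_mult) (use p I0 in auto)
    have C: "ennreal (p * l * (1 + m) + (1 - p) * l powr (-q) * I) = ennreal (p * l * (1 + m)) + ennreal ((1 - p) * l powr (-q) * I)"
      by (rule ennreal_plus) (use p l0 m0 I0 in auto)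
    show ?thesis unfolding C A B ..
  qed
  also have "p * l * (1 + m) + (1 - p) * l powr (-q) * I = (p + (1 - p) * I) * (1 + m) powr p"
  proof -
    have h1: "l * (1 + m) = (1 + m) powr p"
      unfolding l_def using m0 powr_mult_base[of "1 + m" "p - 1"] by (simp add: mult.commute)
    have h2: "l powr (-q) = (1 + m) powr p"
    proof -
      have "(p - 1) * (-q) = p" using p q by (simp add: field_simps)
      then show ?thesis unfolding l_def by (simp add: powr_powr)
    qed
    have "p * l * (1 + m) + (1 - p) * l powr (-q) * I = p * (l * (1 + m)) + (1 - p) * I * l powr (-q)"
      by (simp only: mult_ac)
    also have "\<dots> = p * (1 + m) powr p + (1 - p) * I * (1 + m) powr p" by (simp only: h1 h2)
    also have "\<dots> = (p + (1 - p) * I) * (1 + m) powr p" by (simp only: distrib_right)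
    finally show ?thesis .
  qed
  finally show ?thesis unfolding m_def .
qed

theorem lemma4p8:
  fixes \<alpha> :: real
  assumes "- 1 / real DIM('a::euclidean_space) < \<alpha>" and "\<alpha> < 0"
  shows "\<exists>C::real. \<exists>\<alpha>1 \<alpha>2::real.
           0 < \<alpha>1 \<and> \<alpha>1 < - \<alpha> * real DIM('a) \<and>
           - \<alpha> * real DIM('a) < \<alpha>2 \<and> \<alpha>2 < 1 \<and>
           (\<forall>(M::'a measure) \<rho> S. P1 M \<longrightarrow> lebesgue_decomp M \<rho> S \<longrightarrow>
              F_alpha \<alpha> \<rho> \<ge> ereal (C - (\<integral>x. norm x \<partial>M) powr \<alpha>1 - (\<integral>x. norm x \<partial>M) powr \<alpha>2))"
proof -
  define n where "n = real DIM('a)"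
  have n1: "n \<ge> 1" unfolding n_def by simp
  define p where "p = 1 / (1 - \<alpha>)"
  define q where "q = p / (1 - p)"
  have p0: "0 < p" and p1: "p < 1" unfolding p_def using assms(2) by (auto simp: field_simps)
  have qa: "q = - 1 / \<alpha>" unfolding q_def p_def using assms(2) by (simp add: field_simps)
  have an: "- \<alpha> * n < 1" using assms(1) n1 unfolding n_def[symmetric] by (simp add: field_simps)
  have nq: "real DIM('a) < q" unfolding qa n_def[symmetric] using an assms(2) by (simp add: field_simps)
  obtain I where I: "(\<integral>\<^sup>+x. ennreal ((1 + norm (x::'a)) powr (-q)) \<partial>lborel) = ennreal I" and I0: "I \<ge> 0"
    using tail_finite[OF nq] by (auto simp: less_top_ennreal)
  define K where "K = p + (1 - p) * I"
  have K0: "K \<ge> 0" unfolding K_def using p0 p1 I0 by simp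
  define a2 where "a2 = (max p (-\<alpha> * n) + 1) / 2"
  define a1 where "a1 = -\<alpha> * n / 2"
  define D where "D = K * (1 + max 1 ((K * 2 powr p) powr (1/(a2-p)))) powr p"
  have D0: "D \<ge> 0" unfolding D_def using K0 by simp
  have a2p: "p < a2" unfolding a2_def using p1 by simp
  show ?thesis
  proof (intro exI conjI allI impI)
    show "0 < a1" unfolding a1_def using n1 assms(2) mult_neg_pos[of \<alpha> n] by simp
    show "a1 < - \<alpha> * real DIM('a)" unfolding a1_def n_def[symmetric] using n1 assms(2)
      using mult_neg_pos[of \<alpha> n] by simp
    show "- \<alpha> * real DIM('a) < a2" unfolding a2_def n_def[symmetric] using an by simp
    show "a2 < 1" unfolding a2_def using an p1 by simp
    fix M :: "'a measure" and \<rho> S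
    assume P: "P1 M" and Dc: "lebesgue_decomp M \<rho> S"
    define m where "m = (\<integral>x. norm x \<partial>M)"
    have m0: "m \<ge> 0" unfolding m_def by simp
    have kb: "(\<integral>\<^sup>+x. ennreal (\<rho> x powr p) \<partial>lborel) \<le> ennreal (K * (1 + m) powr p)"
      using key_bound[OF p0 p1 q_def I I0 P Dc] unfolding K_def m_def .
    also have "\<dots> \<le> ennreal (D + m powr a2)"
      using elem_bound[OF K0 p0 a2p m0] unfolding D_def by (rule ennreal_leI)
    finally have "enn2ereal (\<integral>\<^sup>+x. ennreal (\<rho> x powr p) \<partial>lborel) \<le> ereal (D + m powr a2)"
      using m0 D0 by (metis add_increasing2 enn2ereal_ennreal ennreal_plus powr_ge_zero less_eq_ennreal.rep_eq)
    then have X: "- ereal (D + m powr a2) \<le> - enn2ereal (\<integral>\<^sup>+x. ennreal (\<rho> x powr p) \<partial>lborel)"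
      by (simp only: ereal_minus_le_minus)
    have F: "F_alpha \<alpha> \<rho> = - enn2ereal (\<integral>\<^sup>+x. ennreal (\<rho> x powr p) \<partial>lborel)"
      unfolding F_alpha_def p_def ..
    have "- ereal (D + m powr a2) \<le> F_alpha \<alpha> \<rho>" using X F by simp
    moreover have "ereal (- D - m powr a1 - m powr a2) \<le> - ereal (D + m powr a2)" by simp
    ultimately show "ereal (- D - m powr a1 - m powr a2) \<le> F_alpha \<alpha> \<rho>" using order_trans by blast
  qed
qed

end
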